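(* Let $\psi:\mathbb{C}\to\mathbb{R}$ be a $C^2$ function with $m\le\Delta\psi\le M$ for constants $m,M>0$. For any two $\ell$-tuples $\mathfrak{p}=(p_1,\dots,p_\ell),\mathfrak{q}=(q_1,\dots,q_\ell)\in\mathbb{C}^\ell$, each of distinct points, $$\mathscr{F}_\psi(\mathfrak{p})=\frac{(z-p_1)\cdots(z-p_\ell)}{(z-q_1)\cdots(z-q_\ell)}\cdot\mathscr{F}_\psi(\mathfrak{q}).$$
   Context: $\mathscr{F}_\psi=L^2(\mathbb{C},e^{-2\psi}d\lambda)\cap\mathscr{O}(\mathbb{C})$ (holomorphic functions on $\mathbb{C}$ square integrable with respect to $e^{-2\psi}d\lambda$, $\lambda$ Lebesgue measure), and for a tuple $\mathfrak{p}$ of distinct points $\mathscr{F}_\psi(\mathfrak{p})=\{\varphi\in\mathscr{F}_\psi:\varphi(p_1)=\dots=\varphi(p_\ell)=0\}$. The right-hand side denotes the set of functions $z\mapsto\frac{(z-p_1)\cdots(z-p_\ell)}{(z-q_1)\cdots(z-q_\ell)}\varphi(z)$, $\varphi\in\mathscr{F}_\psi(\mathfrak{q})$ (with removable singularities filled in). *)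

theory Defs
  imports "HOL-Analysis.Analysis"
begin

definition partial_x :: "(complex \<Rightarrow> real) \<Rightarrow> complex \<Rightarrow> real" where
  "partial_x f z = deriv (\<lambda>t::real. f (z + complex_of_real t)) 0"

definition partial_y :: "(complex \<Rightarrow> real) \<Rightarrow> complex \<Rightarrow> real" where
  "partial_y f z = deriv (\<lambda>t::real. f (z + \<i> * complex_of_real t)) 0"

definition laplacian :: "(complex \<Rightarrow> real) \<Rightarrow> complex \<Rightarrow> real" where
  "laplacian f z = partial_x (partial_x f) z + partial_y (partial_y f) z"

definition C2_function :: "(complex \<Rightarrow> real) \<Rightarrow> bool" where
  "C2_function f \<longleftrightarrow>
     (\<exists>(D1 :: complex \<Rightarrow> complex \<Rightarrow>\<^sub>L real) (D2 :: complex \<Rightarrow> complex \<Rightarrow>\<^sub>L (complex \<Rightarrow>\<^sub>L real)).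
        (\<forall>z. (f has_derivative blinfun_apply (D1 z)) (at z)) \<and>
        (\<forall>z. (D1 has_derivative blinfun_apply (D2 z)) (at z)) \<and>
        continuous_on UNIV D2)"

definition fock_space :: "(complex \<Rightarrow> real) \<Rightarrow> (complex \<Rightarrow> complex) set" where
  "fock_space \<psi> = {f. f holomorphic_on UNIV \<and>
      integrable lborel (\<lambda>z. (norm (f z))\<^sup>2 * exp (- 2 * \<psi> z))}"

definition fock_vanishing :: "(complex \<Rightarrow> real) \<Rightarrow> complex list \<Rightarrow> (complex \<Rightarrow> complex) set" where
  "fock_vanishing \<psi> ps = {f \<in> fock_space \<psi>. \<forall>p \<in> set ps. f p = 0}"

text \<open>The set of functions \<open>z \<mapsto> \<Prod>(z-p_i)/\<Prod>(z-q_i) \<phi>(z)\<close>, \<open>\<phi> \<in> F_\<psi>(q)\<close>, with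
  removable singularities filled in: entire functions agreeing with that quotient
  off the points \<open>q_i\<close>.\<close>
definition ratio_multiple ::
  "complex list \<Rightarrow> complex list \<Rightarrow> (complex \<Rightarrow> complex) set \<Rightarrow> (complex \<Rightarrow> complex) set" where
  "ratio_multiple ps qs S = {g. g holomorphic_on UNIV \<and>
      (\<exists>\<phi>\<in>S. \<forall>z. z \<notin> set qs \<longrightarrow>
          g z = (\<Prod>i<length ps. z - ps ! i) / (\<Prod>i<length qs. z - qs ! i) * \<phi> z)}"

end

theory Submission
  imports Defs "HOL-Complex_Analysis.Complex_Analysis"
begin

definition Pl :: "complex list \<Rightarrow> complex \<Rightarrow> complex" where
  "Pl ps z = (\<Prod>i<length ps. z - ps ! i)"

lemma Pl_cons: "Pl (p # ps) z = (z - p) * Pl ps z"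
  unfolding Pl_def by (simp only: length_Cons prod.lessThan_Suc_shift nth_Cons_0 nth_Cons_Suc)

lemma Pl_holo: "Pl ps holomorphic_on UNIV"
  unfolding Pl_def by (intro holomorphic_intros)

lemma Pl_cont: "continuous_on UNIV (Pl ps)"
  using Pl_holo holomorphic_on_imp_continuous_on by blast

lemma Pl_zero: "p \<in> set ps \<Longrightarrow> Pl ps p = 0"
  by (induction ps) (auto simp: Pl_cons)

lemma Pl_nil: "Pl [] z = 1" by (simp add: Pl_def)

lemma Pl_nonzero: "z \<notin> set ps \<Longrightarrow> Pl ps z \<noteq> 0"
  by (induction ps) (auto simp: Pl_cons Pl_nil)

lemma division:
  "distinct ps \<Longrightarrow> h holomorphic_on UNIV \<Longrightarrow> \<forall>p\<in>set ps. h p = 0 \<Longrightarrow>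
   \<exists>k. k holomorphic_on UNIV \<and> (\<forall>z. h z = Pl ps z * k z)"
proof (induction ps arbitrary: h)
  case Nil
  then show ?case by (auto simp: Pl_def)
next
  case (Cons p ps)
  define h1 where "h1 = (\<lambda>z. if z = p then deriv h p else (h z - h p) / (z - p))"
  have hp: "h p = 0" using Cons.prems by auto
  have h1h: "h1 holomorphic_on UNIV" unfolding h1_def
    by (rule pole_lemma) (use Cons.prems in auto)
  have eq: "h z = (z - p) * h1 z" for z
    using hp by (auto simp: h1_def)
  have "\<forall>q\<in>set ps. h1 q = 0"
    using Cons.prems by (auto simp: h1_def)
  then obtain k where k: "k holomorphic_on UNIV" "\<forall>z. h1 z = Pl ps z * k z"
    using Cons.IH[OF _ h1h] Cons.prems by auto
  show ?case
    by (rule exI[of _ k]) (use k eq in \<open>auto simp: Pl_cons\<close>)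
qed

lemma norm_sum_nth_le: "i < length xs \<Longrightarrow> norm (xs ! i) \<le> (\<Sum>x\<leftarrow>xs. norm x)"
proof (induction xs arbitrary: i)
  case Nil then show ?case by simp
next
  case (Cons a xs)
  have "0 \<le> (\<Sum>x\<leftarrow>xs. norm x)" by (induction xs) auto
  with Cons show ?case by (cases i) (auto intro: add_increasing)
qed

lemma growth:
  assumes "length ps = length qs"
  shows "\<exists>R C. \<forall>z. norm z \<ge> R \<longrightarrow> norm (Pl qs z) \<le> C * norm (Pl ps z)"
proof -
  define A where "A = (\<Sum>x\<leftarrow>ps. norm x) + (\<Sum>x\<leftarrow>qs. norm x)"
  have nn: "0 \<le> (\<Sum>x\<leftarrow>xs. norm x)" for xs :: "complex list" by (induction xs) auto
  have pA: "norm (ps ! i) \<le> A" if "i < length ps" for i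
    using norm_sum_nth_le[OF that] nn[of qs] unfolding A_def by linarith
  have qA: "norm (qs ! i) \<le> A" if "i < length qs" for i
    using norm_sum_nth_le[OF that] nn[of ps] unfolding A_def by linarith
  have A0: "0 \<le> A" using nn[of ps] nn[of qs] unfolding A_def by linarith
  show ?thesis
  proof (intro exI allI impI)
    fix z :: complex assume z: "2 * A \<le> norm z"
    have "(\<Prod>i<length qs. norm (z - qs ! i)) \<le> (\<Prod>i<length qs. 3 * norm (z - ps ! i))"
    proof (rule prod_mono)
      fix i assume "i \<in> {..<length qs}"
      then have i: "i < length qs" "i < length ps" using assms by auto
      have "norm (z - qs ! i) \<le> norm z + A"
        using norm_triangle_ineq4[of z "qs!i"] qA[OF i(1)] by linarith
      moreover have "norm z - A \<le> norm (z - ps ! i)"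
        using norm_triangle_ineq2[of z "ps!i"] pA[OF i(2)] by linarith
      ultimately show "0 \<le> norm (z - qs ! i) \<and> norm (z - qs ! i) \<le> 3 * norm (z - ps ! i)"
        using z A0 by auto
    qed
    also have "\<dots> = 3 ^ length qs * (\<Prod>i<length qs. norm (z - ps ! i))"
      by (simp add: prod.distrib)
    finally show "norm (Pl qs z) \<le> 3 ^ length qs * norm (Pl ps z)"
      unfolding Pl_def using assms by (simp add: prod_norm)
  qed
qed

lemma integ_transfer:
  assumes "length ps = length qs"
    and k: "k holomorphic_on UNIV"
    and cw: "continuous_on UNIV (\<psi> :: complex \<Rightarrow> real)"
    and int: "integrable lborel (\<lambda>z. (norm (Pl ps z * k z))\<^sup>2 * exp (- 2 * \<psi> z))"
  shows "integrable lborel (\<lambda>z. (norm (Pl qs z * k z))\<^sup>2 * exp (- 2 * \<psi> z))"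
proof -
  obtain R C where RC: "\<forall>z. norm z \<ge> R \<longrightarrow> norm (Pl qs z) \<le> C * norm (Pl ps z)"
    using growth[OF assms(1)] by blast
  define G where "G = (\<lambda>z. (norm (Pl qs z * k z))\<^sup>2 * exp (- 2 * \<psi> z))"
  define F where "F = (\<lambda>z. (norm (Pl ps z * k z))\<^sup>2 * exp (- 2 * \<psi> z))"
  have kc: "continuous_on UNIV k" using k holomorphic_on_imp_continuous_on by blast
  have Gc: "continuous_on UNIV G" unfolding G_def
    by (intro continuous_intros Pl_cont kc cw continuous_on_subset[OF Pl_cont]
        continuous_on_subset[OF kc] continuous_on_subset[OF cw]) auto
  have i1: "integrable lborel (\<lambda>z. indicator (cball 0 R) z *\<^sub>R G z)"
    by (rule borel_integrable_compact) (auto intro: continuous_on_subset[OF Gc])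
  have i2: "integrable lborel (\<lambda>z. C\<^sup>2 * F z)"
    using int unfolding F_def by auto
  have meas: "G \<in> borel_measurable lborel"
    using borel_measurable_continuous_onI[OF Gc] by simp
  show ?thesis
    unfolding G_def[symmetric]
  proof (rule Bochner_Integration.integrable_bound[OF Bochner_Integration.integrable_add[OF i1 i2] meas], rule AE_I2)
    fix z
    have G0: "0 \<le> G z" "0 \<le> F z" unfolding G_def F_def by auto
    show "norm (G z) \<le> norm (indicator (cball 0 R) z *\<^sub>R G z + C\<^sup>2 * F z)"
    proof (cases "norm z \<le> R")
      case True
      then have i1: "indicator (cball 0 R) z = (1::real)" by (simp add: indicator_def)
      have "0 \<le> C\<^sup>2 * F z" using G0 by simp
      have e: "indicator (cball 0 R) z *\<^sub>R G z + C\<^sup>2 * F z = G z + C\<^sup>2 * F z"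
        using i1 by simp
      show ?thesis unfolding e real_norm_def using G0 \<open>0 \<le> C\<^sup>2 * F z\<close> by linarith
    next
      case False
      then have ind: "indicator (cball 0 R) z *\<^sub>R G z = 0" by (simp add: indicator_def)
      have le: "norm (Pl qs z) \<le> C * norm (Pl ps z)" using RC False by auto
      have m1: "norm (Pl qs z) * norm (k z) \<le> C * norm (Pl ps z) * norm (k z)"
        by (rule mult_right_mono[OF le norm_ge_zero])
      have "(norm (Pl qs z) * norm (k z))\<^sup>2 \<le> (C * norm (Pl ps z) * norm (k z))\<^sup>2"
        by (rule power_mono[OF m1]) simp
      also have "\<dots> = C\<^sup>2 * (norm (Pl ps z * k z))\<^sup>2" by (simp add: norm_mult power_mult_distrib)
      finally have m2: "(norm (Pl qs z * k z))\<^sup>2 \<le> C\<^sup>2 * (norm (Pl ps z * k z))\<^sup>2"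
        by (simp add: norm_mult)
      have "G z \<le> C\<^sup>2 * F z" unfolding G_def F_def
        using mult_right_mono[OF m2, of "exp (- 2 * \<psi> z)"] by (simp add: mult.assoc)
      have e: "indicator (cball 0 R) z *\<^sub>R G z + C\<^sup>2 * F z = C\<^sup>2 * F z"
        using ind by simp
      show ?thesis unfolding e real_norm_def using G0 \<open>G z \<le> C\<^sup>2 * F z\<close> by linarith
    qed
  qed
qed

lemma eq_off_finite:
  fixes f g :: "complex \<Rightarrow> complex"
  assumes "continuous_on UNIV f" "continuous_on UNIV g" "finite S"
    and "\<forall>z. z \<notin> S \<longrightarrow> f z = g z"
  shows "f z = g z"
proof -
  have "(f \<longlongrightarrow> f z) (at z)" "(g \<longlongrightarrow> g z) (at z)"
    using assms(1,2) by (auto simp: continuous_on_def)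
  moreover have "eventually (\<lambda>w. w \<notin> S) (at z)"
    using assms(3) islimpt_finite islimpt_iff_eventually by blast
  then have "eventually (\<lambda>w. f w = g w) (at z)"
    by eventually_elim (use assms(4) in auto)
  ultimately have "(g \<longlongrightarrow> f z) (at z)" using tendsto_cong by (metis (mono_tags))
  then show ?thesis using \<open>(g \<longlongrightarrow> g z) (at z)\<close> tendsto_unique[OF at_neq_bot] by blast
qed

theorem proposition1p11:
  fixes \<psi> :: "complex \<Rightarrow> real" and m M :: real and ps qs :: "complex list"
  assumes "C2_function \<psi>"
    and "m > 0" and "M > 0"
    and "\<forall>z. m \<le> laplacian \<psi> z \<and> laplacian \<psi> z \<le> M"
    and "length ps = length qs"
    and "distinct ps" and "distinct qs"
  shows "fock_vanishing \<psi> ps = ratio_multiple ps qs (fock_vanishing \<psi> qs)"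
proof -
  have cw: "continuous_on UNIV \<psi>"
  proof -
    obtain D1 :: "complex \<Rightarrow> complex \<Rightarrow>\<^sub>L real" where "\<forall>z. (\<psi> has_derivative blinfun_apply (D1 z)) (at z)"
      using assms(1) unfolding C2_function_def by blast
    then have "\<forall>z\<in>UNIV. isCont \<psi> z" using has_derivative_continuous by blast
    then show ?thesis by (rule continuous_at_imp_continuous_on)
  qed
  show ?thesis
  proof
    show "fock_vanishing \<psi> ps \<subseteq> ratio_multiple ps qs (fock_vanishing \<psi> qs)"
    proof
      fix g assume g: "g \<in> fock_vanishing \<psi> ps"
      then have gh: "g holomorphic_on UNIV" and gi: "integrable lborel (\<lambda>z. (norm (g z))\<^sup>2 * exp (- 2 * \<psi> z))"
        and gz: "\<forall>p\<in>set ps. g p = 0"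
        by (auto simp: fock_vanishing_def fock_space_def)
      obtain k where k: "k holomorphic_on UNIV" "\<forall>z. g z = Pl ps z * k z"
        using division[OF assms(6) gh gz] by blast
      define \<phi> where "\<phi> = (\<lambda>z. Pl qs z * k z)"
      have "integrable lborel (\<lambda>z. (norm (Pl ps z * k z))\<^sup>2 * exp (- 2 * \<psi> z))"
        using gi k(2) by simp
      then have "integrable lborel (\<lambda>z. (norm (\<phi> z))\<^sup>2 * exp (- 2 * \<psi> z))"
        unfolding \<phi>_def by (rule integ_transfer[OF assms(5) k(1) cw])
      moreover have "\<phi> holomorphic_on UNIV" unfolding \<phi>_def
        by (intro holomorphic_intros Pl_holo k(1))
      moreover have "\<forall>q\<in>set qs. \<phi> q = 0" by (auto simp: \<phi>_def Pl_zero)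
      ultimately have phi: "\<phi> \<in> fock_vanishing \<psi> qs"
        by (auto simp: fock_vanishing_def fock_space_def)
      have "\<forall>z. z \<notin> set qs \<longrightarrow> g z = Pl ps z / Pl qs z * \<phi> z"
      proof (intro allI impI)
        fix z assume "z \<notin> set qs"
        then have "Pl qs z \<noteq> 0" by (rule Pl_nonzero)
        then show "g z = Pl ps z / Pl qs z * \<phi> z" using k(2) by (simp add: \<phi>_def)
      qed
      then have "\<forall>z. z \<notin> set qs \<longrightarrow>
          g z = (\<Prod>i<length ps. z - ps ! i) / (\<Prod>i<length qs. z - qs ! i) * \<phi> z"
        unfolding Pl_def .
      then show "g \<in> ratio_multiple ps qs (fock_vanishing \<psi> qs)"
        unfolding ratio_multiple_def using gh phi by blast
    qed
  next
    show "ratio_multiple ps qs (fock_vanishing \<psi> qs) \<subseteq> fock_vanishing \<psi> ps"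
    proof
      fix g assume "g \<in> ratio_multiple ps qs (fock_vanishing \<psi> qs)"
      then obtain \<phi> where gh: "g holomorphic_on UNIV" and phi: "\<phi> \<in> fock_vanishing \<psi> qs"
        and geq: "\<forall>z. z \<notin> set qs \<longrightarrow>
          g z = (\<Prod>i<length ps. z - ps ! i) / (\<Prod>i<length qs. z - qs ! i) * \<phi> z"
        unfolding ratio_multiple_def by blast
      have ph: "\<phi> holomorphic_on UNIV" and pi: "integrable lborel (\<lambda>z. (norm (\<phi> z))\<^sup>2 * exp (- 2 * \<psi> z))"
        and pz: "\<forall>q\<in>set qs. \<phi> q = 0"
        using phi by (auto simp: fock_vanishing_def fock_space_def)
      obtain k where k: "k holomorphic_on UNIV" "\<forall>z. \<phi> z = Pl qs z * k z"
        using division[OF assms(7) ph pz] by blast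
      have kc: "continuous_on UNIV k" using k(1) holomorphic_on_imp_continuous_on by blast
      have gPk: "g z = Pl ps z * k z" for z
      proof (rule eq_off_finite[where S = "set qs" and f = g and g = "\<lambda>z. Pl ps z * k z"])
        show "continuous_on UNIV g" using gh holomorphic_on_imp_continuous_on by blast
        show "continuous_on UNIV (\<lambda>z. Pl ps z * k z)"
          by (intro continuous_intros Pl_cont kc)
        have geq': "\<forall>z. z \<notin> set qs \<longrightarrow> g z = Pl ps z / Pl qs z * \<phi> z"
          using geq unfolding Pl_def .
        show "\<forall>z. z \<notin> set qs \<longrightarrow> g z = Pl ps z * k z"
        proof (intro allI impI)
          fix z assume "z \<notin> set qs"
          then have "Pl qs z \<noteq> 0" by (rule Pl_nonzero)
          then show "g z = Pl ps z * k z" using k(2) geq' \<open>z \<notin> set qs\<close> by simp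
        qed
      qed simp
      have "integrable lborel (\<lambda>z. (norm (Pl qs z * k z))\<^sup>2 * exp (- 2 * \<psi> z))"
        using pi k(2) by simp
      then have "integrable lborel (\<lambda>z. (norm (Pl ps z * k z))\<^sup>2 * exp (- 2 * \<psi> z))"
        by (rule integ_transfer[OF assms(5)[symmetric] k(1) cw])
      then have "integrable lborel (\<lambda>z. (norm (g z))\<^sup>2 * exp (- 2 * \<psi> z))"
        using gPk by simp
      then show "g \<in> fock_vanishing \<psi> ps"
        using gh gPk by (auto simp: fock_vanishing_def fock_space_def Pl_zero)
    qed
  qed
qed

end
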